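(* Let $(\mathbb{X},\oplus,\otimes,\mathbb{0},\mathbb{1})$ be a linearly ordered, algebraically complete idempotent semifield, and let $\bm{A}\in\mathbb{X}^{n\times n}$ be a reciprocal matrix (i.e. $\bm{A}^{-}=\bm{A}$) with no zero entries, with spectral radius $\lambda$, and let $\bm{A}_{\lambda}=\lambda^{-1}\bm{A}$. Consider the problem of minimizing $d(\bm{A},\bm{x}\bm{x}^{-})$ over all regular vectors $\bm{x}\in\mathbb{X}^{n}$. Then the minimum value equals $\lambda$, and the set of all solutions is $\{\bm{x}=\bm{A}_{\lambda}^{\ast}\bm{u}: \bm{u}\in\mathbb{X}^n,\ \bm{u}\neq\bm{0}\}$.
   Context: An idempotent semifield is a set $\mathbb{X}$ with associative, commutative operations $\oplus$ (addition) and $\otimes$ (multiplication, usually omitted in writing) with neutral elements $\mathbb{0}$ and $\mathbb{1}$, multiplication distributing over addition, idempotent addition ($x\oplus x=x$), and every nonzero $x$ having an inverse $x^{-1}$ with $xx^{-1}=\mathbb{1}$. It is assumed linearly ordered by the order $x\le y \iff x\oplus y=y$, and algebraically complete: $x^p=a$ is solvable for every $a$ and integer $p>0$, so rational powers are defined. Matrix and vector operations use the usual formulas with $\oplus,\otimes$ in place of $+,\times$; $\bm{0}$ is the zero vector; a vector is regular if it has no zero entries. For a nonzero column vector $\bm{x}=(x_i)$, $\bm{x}^{-}$ is the row vector with entries $x_i^{-1}$ if $x_i\ne\mathbb{0}$ and $\mathbb{0}$ otherwise. For a nonzero matrix $\bm{A}=(a_{ij})$, $\bm{A}^{-}=(a^{-}_{ij})$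 with $a^{-}_{ij}=a_{ji}^{-1}$ if $a_{ji}\neq\mathbb{0}$ and $\mathbb{0}$ otherwise. The trace is $\mathrm{tr}\,\bm{A}=a_{11}\oplus\cdots\oplus a_{nn}$. The distance between square matrices is $d(\bm{A},\bm{B})=\mathrm{tr}(\bm{B}^{-}\bm{A})\oplus\mathrm{tr}(\bm{A}^{-}\bm{B})$. $\bm{I}$ is the identity matrix, $\bm{A}^0=\bm{I}$, $\bm{A}^p=\bm{A}^{p-1}\bm{A}$. The spectral radius of $\bm{A}$ of order $n$ is $\lambda=\bigoplus_{k=1}^{n}\bigoplus_{1\le i_1,\ldots,i_k\le n}(a_{i_1i_2}a_{i_2i_3}\cdots a_{i_ki_1})^{1/k}$. For a square matrix $\bm{M}$ of order $n$, $\bm{M}^{\ast}=\bm{I}\oplus\bm{M}\oplus\cdots\oplus\bm{M}^{n-1}$. *)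

theory Defs
  imports Main "HOL-Library.Cardinality"
begin

text \<open>Addition is the idempotent sum (oplus), multiplication is otimes,
  0 and 1 are the neutral elements, the order is x \<le> y iff x + y = y,
  inverse is the multiplicative inverse (with inverse 0 = 0 by convention).\<close>
class idem_semifield = comm_semiring_1 + linorder + inverse +
  assumes add_idem: "x + x = x"
    and le_iff_add: "x \<le> y \<longleftrightarrow> x + y = y"
    and right_inverse: "x \<noteq> 0 \<Longrightarrow> x * inverse x = 1"
    and inverse_zero: "inverse 0 = 0"
    and alg_complete: "0 < p \<Longrightarrow> \<exists>x. x ^ p = a"

definition root :: "nat \<Rightarrow> 'a::idem_semifield \<Rightarrow> 'a" where
  "root k a = (SOME x. x ^ k = a)"

definition mmul :: "('n::finite \<Rightarrow> 'n \<Rightarrow> 'a::idem_semifield) \<Rightarrow> ('n \<Rightarrow> 'n \<Rightarrow> 'a) \<Rightarrow> 'n \<Rightarrow> 'n \<Rightarrow> 'a" where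
  "mmul A B = (\<lambda>i j. \<Sum>k\<in>UNIV. A i k * B k j)"

definition mvec :: "('n::finite \<Rightarrow> 'n \<Rightarrow> 'a::idem_semifield) \<Rightarrow> ('n \<Rightarrow> 'a) \<Rightarrow> 'n \<Rightarrow> 'a" where
  "mvec A x = (\<lambda>i. \<Sum>j\<in>UNIV. A i j * x j)"

definition idm :: "'n \<Rightarrow> 'n \<Rightarrow> 'a::idem_semifield" where
  "idm = (\<lambda>i j. if i = j then 1 else 0)"

primrec mpow :: "('n::finite \<Rightarrow> 'n \<Rightarrow> 'a::idem_semifield) \<Rightarrow> nat \<Rightarrow> 'n \<Rightarrow> 'n \<Rightarrow> 'a" where
  "mpow A 0 = idm"
| "mpow A (Suc p) = mmul (mpow A p) A"

definition mstar :: "('n::finite \<Rightarrow> 'n \<Rightarrow> 'a::idem_semifield) \<Rightarrow> 'n \<Rightarrow> 'n \<Rightarrow> 'a" where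
  "mstar M = (\<lambda>i j. \<Sum>p<CARD('n). mpow M p i j)"

text \<open>A^- : (A^-)_ij = a_ji^{-1} if a_ji nonzero, 0 otherwise\<close>
definition mconj :: "('n \<Rightarrow> 'n \<Rightarrow> 'a::idem_semifield) \<Rightarrow> 'n \<Rightarrow> 'n \<Rightarrow> 'a" where
  "mconj A = (\<lambda>i j. inverse (A j i))"

definition outer_conj :: "('n \<Rightarrow> 'a::idem_semifield) \<Rightarrow> 'n \<Rightarrow> 'n \<Rightarrow> 'a" where
  "outer_conj x = (\<lambda>i j. x i * inverse (x j))"

definition mtrace :: "('n::finite \<Rightarrow> 'n \<Rightarrow> 'a::idem_semifield) \<Rightarrow> 'a" where
  "mtrace A = (\<Sum>i\<in>UNIV. A i i)"

definition mdist :: "('n::finite \<Rightarrow> 'n \<Rightarrow> 'a::idem_semifield) \<Rightarrow> ('n \<Rightarrow> 'n \<Rightarrow> 'a) \<Rightarrow> 'a" where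
  "mdist A B = mtrace (mmul (mconj B) A) + mtrace (mmul (mconj A) B)"

definition spec_rad :: "('n::finite \<Rightarrow> 'n \<Rightarrow> 'a::idem_semifield) \<Rightarrow> 'a" where
  "spec_rad A = (\<Sum>k\<in>{1..CARD('n)}. \<Sum>is\<in>{is :: 'n list. length is = k}.
      root k (\<Prod>m<k. A (is ! m) (is ! ((m + 1) mod k))))"

definition regular :: "('n \<Rightarrow> 'a::idem_semifield) \<Rightarrow> bool" where
  "regular x \<longleftrightarrow> (\<forall>i. x i \<noteq> 0)"

end

theory Submission imports Defs begin

context idem_semifield begin

lemma zero_le': "0 \<le> x" using le_iff_add[of 0 x] by simp

lemma add_max: "x + y = max x y"
proof (cases "x \<le> y")
  case True then show ?thesis using le_iff_add[of x y] by (simp add: max_def)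
next
  case False then have "y \<le> x" by simp
  then show ?thesis using le_iff_add[of y x] False by (simp add: max_def add.commute)
qed

lemma sum_le_iff: "finite S \<Longrightarrow> (sum f S \<le> c) = (\<forall>i\<in>S. f i \<le> c)"
  by (induction S rule: finite_induct) (auto simp: add_max zero_le')

lemma member_le_sum': "finite S \<Longrightarrow> i \<in> S \<Longrightarrow> f i \<le> sum f S"
  using sum_le_iff[of S f "sum f S"] by auto

lemma mult_mono_r: "a \<le> b \<Longrightarrow> a * c \<le> b * c"
  using le_iff_add[of a b] le_iff_add[of "a*c" "b*c"] by (metis distrib_right)

lemma mult_mono_l: "a \<le> b \<Longrightarrow> c * a \<le> c * b"
  using mult_mono_r[of a b c] by (simp add: mult.commute)

lemma mult_mono2: "a \<le> b \<Longrightarrow> c \<le> d \<Longrightarrow> a * c \<le> b * d"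
  by (meson mult_mono_l mult_mono_r order_trans)

lemma left_inverse': "x \<noteq> 0 \<Longrightarrow> inverse x * x = 1"
  using right_inverse by (simp add: mult.commute)

lemma mult_nz: "x \<noteq> 0 \<Longrightarrow> y \<noteq> 0 \<Longrightarrow> x * y \<noteq> 0"
proof
  assume "x \<noteq> 0" "y \<noteq> 0" "x * y = 0"
  then have "x * y * inverse y = 0" by simp
  then show False using \<open>x \<noteq> 0\<close> \<open>y \<noteq> 0\<close> right_inverse[of y] by (simp add: mult.assoc)
qed

lemma inverse_nz: "x \<noteq> 0 \<Longrightarrow> inverse x \<noteq> 0"
  using right_inverse[of x] by (metis mult_zero_right zero_neq_one)

lemma inverse_unique: "x * y = 1 \<Longrightarrow> inverse x = y"
proof -
  assume h: "x * y = 1"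
  then have "x \<noteq> 0" by auto
  have "inverse x = inverse x * (x * y)" using h by simp
  also have "\<dots> = y" using left_inverse'[OF \<open>x \<noteq> 0\<close>] by (simp add: mult.assoc[symmetric])
  finally show ?thesis .
qed

lemma inverse_mult': "x \<noteq> 0 \<Longrightarrow> y \<noteq> 0 \<Longrightarrow> inverse (x * y) = inverse x * inverse y"
  apply (rule inverse_unique)
  using right_inverse[of x] right_inverse[of y] by (metis mult.assoc mult.left_commute mult_1_right)

lemma inverse_inverse': "x \<noteq> 0 \<Longrightarrow> inverse (inverse x) = x"
  by (rule inverse_unique) (simp add: left_inverse')

lemma mult_le_cancel_r: "c \<noteq> 0 \<Longrightarrow> (a * c \<le> b * c) = (a \<le> b)"
proof
  assume c: "c \<noteq> 0" and "a * c \<le> b * c"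
  then have "a * c * inverse c \<le> b * c * inverse c" using mult_mono_r by blast
  then show "a \<le> b" using right_inverse[OF c] by (simp add: mult.assoc)
qed (rule mult_mono_r)

lemma mult_less_l: "a \<noteq> 0 \<Longrightarrow> c < d \<Longrightarrow> a * c < a * d"
  using mult_le_cancel_r[of a d c] mult_mono_l[of c d a] by (auto simp: mult.commute less_le_not_le)

lemma mult_less2: "a < b \<Longrightarrow> c < d \<Longrightarrow> a * c < b * d"
proof (cases "a = 0")
  case True
  assume "a < b" "c < d"
  then have "b \<noteq> 0" "d \<noteq> 0" using zero_le'[of a] zero_le'[of c] by auto
  then show ?thesis using True mult_nz[of b d] zero_le'[of "b*d"] by (simp add: order_le_neq_trans)
next
  case False
  assume "a < b" "c < d"
  then have "a * c < a * d" using mult_less_l False by auto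
  also have "a * d \<le> b * d" using \<open>a < b\<close> mult_mono_r by auto
  finally show ?thesis .
qed

lemma power_less': "a < b \<Longrightarrow> 0 < k \<Longrightarrow> a ^ k < b ^ k"
proof (induction k)
  case (Suc k) then show ?case
    by (cases k) (auto intro: mult_less2)
qed simp

lemma power_mono': "a \<le> b \<Longrightarrow> a ^ k \<le> b ^ k"
  by (induction k) (auto intro: mult_mono2)

lemma prod_le_pow: "finite S \<Longrightarrow> (\<forall>i\<in>S. f i \<le> c) \<Longrightarrow> prod f S \<le> c ^ card S"
  by (induction S rule: finite_induct) (auto intro: mult_mono2)

end

lemma root_pow: "0 < k \<Longrightarrow> root k (a::'a::idem_semifield) ^ k = a"
  unfolding root_def using alg_complete[of k a] by (metis (mono_tags, lifting) someI_ex)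

definition walkprod :: "('n \<Rightarrow> 'n \<Rightarrow> 'a::idem_semifield) \<Rightarrow> (nat \<Rightarrow> 'n) \<Rightarrow> nat \<Rightarrow> 'a" where
  "walkprod M w p = (\<Prod>m<p. M (w m) (w (Suc m)))"

lemma walk_upper:
  fixes M :: "'n::finite \<Rightarrow> 'n \<Rightarrow> 'a::idem_semifield"
  assumes "\<And>w. w 0 = i \<Longrightarrow> w p = j \<Longrightarrow> walkprod M w p * z \<le> c"
  shows "mpow M p i j * z \<le> c"
  using assms
proof (induction p arbitrary: j z)
  case 0
  show ?case
  proof (cases "i = j")
    case True
    then have "walkprod M (\<lambda>_. i) 0 * z \<le> c" using 0[of "\<lambda>_. i"] by auto
    then show ?thesis using True by (auto simp: idm_def walkprod_def)
  qed (auto simp: idm_def zero_le')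
next
  case (Suc p)
  have "\<forall>k\<in>UNIV. mpow M p i k * M k j * z \<le> c"
  proof
    fix k :: 'n
    have "mpow M p i k * (M k j * z) \<le> c"
    proof (rule Suc.IH)
      fix w assume w0: "w 0 = i" and wp: "w p = k"
      define w' where "w' = (\<lambda>m. if m \<le> p then w m else j)"
      have "walkprod M w' (Suc p) = walkprod M w p * M k j"
        unfolding walkprod_def w'_def using wp by (auto intro!: prod.cong)
      then show "walkprod M w p * (M k j * z) \<le> c"
        using Suc.prems[of w'] w0 by (simp add: w'_def mult.assoc)
    qed
    then show "mpow M p i k * M k j * z \<le> c" by (simp add: mult.assoc)
  qed
  then show ?case by (simp add: mmul_def sum_distrib_right sum_le_iff)
qed

lemma walk_lower:
  fixes M :: "'n::finite \<Rightarrow> 'n \<Rightarrow> 'a::idem_semifield"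
  shows "walkprod M w p \<le> mpow M p (w 0) (w p)"
proof (induction p)
  case 0 then show ?case by (simp add: walkprod_def idm_def)
next
  case (Suc p)
  have "walkprod M w (Suc p) = walkprod M w p * M (w p) (w (Suc p))"
    by (simp add: walkprod_def)
  also have "\<dots> \<le> mpow M p (w 0) (w p) * M (w p) (w (Suc p))"
    using Suc mult_mono_r by blast
  also have "\<dots> \<le> mpow M (Suc p) (w 0) (w (Suc p))"
    unfolding mpow.simps mmul_def by (rule member_le_sum') auto
  finally show ?case .
qed

lemma mpow_le_mstar: "p < CARD('n::finite) \<Longrightarrow> mpow (M::'n \<Rightarrow> 'n \<Rightarrow> 'a::idem_semifield) p i j \<le> mstar M i j"
  unfolding mstar_def by (rule member_le_sum') auto

lemma walk_reduce:
  fixes M :: "'n::finite \<Rightarrow> 'n \<Rightarrow> 'a::idem_semifield"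
  assumes cyc: "\<And>k is. 1 \<le> k \<Longrightarrow> k \<le> CARD('n) \<Longrightarrow> length is = k \<Longrightarrow>
      (\<Prod>m<k. M (is ! m) (is ! ((m + 1) mod k))) \<le> 1"
  shows "walkprod M w p \<le> mstar M (w 0) (w p)"
proof (induction p arbitrary: w rule: less_induct)
  case (less p)
  show ?case
  proof (cases "p < CARD('n)")
    case True
    then show ?thesis using walk_lower mpow_le_mstar order_trans by blast
  next
    case False
    let ?n = "CARD('n)"
    have "\<not> inj_on w {..?n}"
    proof
      assume "inj_on w {..?n}"
      then have "card (w ` {..?n}) = Suc ?n" by (simp add: card_image)
      moreover have "card (w ` {..?n}) \<le> ?n" by (rule card_mono) auto
      ultimately show False by simp
    qed
    then obtain a b where ab: "a < b" "b \<le> ?n" "w a = w b"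
      unfolding inj_on_def by (metis atMost_iff linorder_neqE_nat)
    define L where "L = b - a"
    have L: "1 \<le> L" "L \<le> ?n" "b = a + L" using ab by (auto simp: L_def)
    have bp: "b \<le> p" using ab False by simp
    define w' where "w' = (\<lambda>m. if m < a then w m else w (m + L))"
    define f where "f = (\<lambda>m. M (w m) (w (Suc m)))"
    have split: "walkprod M w p = prod f {0..<a} * prod f {a..<b} * prod f {b..<p}"
      unfolding walkprod_def f_def using ab bp
      by (simp add: prod.atLeastLessThan_concat atLeast0LessThan[symmetric])
    have mid: "prod f {a..<b} \<le> 1"
    proof -
      define "is" where "is = map (\<lambda>m. w (a + m)) [0..<L]"
      have "prod f {a..<b} = (\<Prod>m\<in>{0..<L}. f (m + a))"
        using prod.shift_bounds_nat_ivl[of f 0 a L] L by (simp add: add.commute)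
      also have "\<dots> = (\<Prod>m<L. f (m + a))" by (simp add: atLeast0LessThan)
      also have "\<dots> = (\<Prod>m<L. M (is ! m) (is ! ((m + 1) mod L)))"
      proof (rule prod.cong)
        fix m assume m: "m \<in> {..<L}"
        show "f (m + a) = M (is ! m) (is ! ((m + 1) mod L))"
        proof (cases "m + 1 < L")
          case True then show ?thesis using m by (simp add: f_def is_def add.commute)
        next
          case False
          then have "m + 1 = L" using m by simp
          then have "Suc (a + m) = b" using L by simp
          then have e: "w (Suc (a + m)) = w a" using ab by simp
          have "(m + 1) mod L = 0" using \<open>m + 1 = L\<close> by simp
          then show ?thesis using m e by (simp add: f_def is_def add.commute)
        qed
      qed simp
      also have "\<dots> \<le> 1" by (rule cyc) (use L in \<open>auto simp: is_def\<close>)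
      finally show ?thesis .
    qed
    have w'prod: "walkprod M w' (p - L) = prod f {0..<a} * prod f {b..<p}"
    proof -
      have "walkprod M w' (p - L) = (\<Prod>m\<in>{0..<a}. M (w' m) (w' (Suc m))) * (\<Prod>m\<in>{a..<p - L}. M (w' m) (w' (Suc m)))"
        unfolding walkprod_def using L bp
        by (simp add: prod.atLeastLessThan_concat atLeast0LessThan[symmetric])
      moreover have "(\<Prod>m\<in>{0..<a}. M (w' m) (w' (Suc m))) = prod f {0..<a}"
      proof (rule prod.cong)
        fix x assume "x \<in> {0..<a}"
        then have "x < a" by simp
        show "M (w' x) (w' (Suc x)) = f x"
        proof (cases "Suc x < a")
          case False
          then have "Suc x = a" using \<open>x < a\<close> by simp
          then show ?thesis using \<open>x < a\<close> ab L by (simp add: w'_def f_def)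
        qed (simp add: w'_def f_def)
      qed simp
      moreover have "(\<Prod>m\<in>{a..<p - L}. M (w' m) (w' (Suc m))) = (\<Prod>m\<in>{a..<p - L}. f (m + L))"
        by (rule prod.cong) (auto simp: w'_def f_def)
      moreover have "(\<Prod>m\<in>{a..<p - L}. f (m + L)) = prod f {a + L..<p - L + L}"
        by (simp add: prod.shift_bounds_nat_ivl)
      moreover have "p - L + L = p" using L bp by simp
      ultimately show ?thesis using L by simp
    qed
    have "walkprod M w p \<le> prod f {0..<a} * 1 * prod f {b..<p}"
      unfolding split using mid by (intro mult_mono_r mult_mono_l)
    also have "\<dots> = walkprod M w' (p - L)" using w'prod by simp
    also have "\<dots> \<le> mstar M (w' 0) (w' (p - L))"
      using less.IH[of "p - L" w'] L bp by simp
    also have "w' 0 = w 0" using ab L by (auto simp: w'_def)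
    also have "w' (p - L) = w p"
    proof -
      have "\<not> p - L < a" using L bp by simp
      then show ?thesis using L bp by (simp add: w'_def)
    qed
    finally show ?thesis .
  qed
qed


definition qf :: "('n::finite \<Rightarrow> 'n \<Rightarrow> 'a::idem_semifield) \<Rightarrow> ('n \<Rightarrow> 'a) \<Rightarrow> 'a" where
  "qf A x = (\<Sum>i\<in>UNIV. \<Sum>j\<in>UNIV. inverse (x i) * A i j * x j)"

lemma mdist_eq:
  fixes A :: "'n::finite \<Rightarrow> 'n \<Rightarrow> 'a::idem_semifield"
  assumes recip: "mconj A = A" and reg: "regular x"
  shows "mdist A (outer_conj x) = qf A x"
proof -
  have oc: "mconj (outer_conj x) = outer_conj x"
    using reg by (auto simp: mconj_def outer_conj_def regular_def fun_eq_iff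
        inverse_mult' inverse_nz inverse_inverse' mult.commute)
  have t1: "mtrace (mmul (outer_conj x) A) = qf A x"
    unfolding mtrace_def mmul_def outer_conj_def qf_def
    by (subst sum.swap) (simp add: mult_ac)
  have t2: "mtrace (mmul A (outer_conj x)) = qf A x"
    unfolding mtrace_def mmul_def outer_conj_def qf_def
    by (simp add: mult_ac)
  show ?thesis unfolding mdist_def oc recip t1 t2 by (simp add: add_idem)
qed

lemma qf_le_iff:
  "(qf A x \<le> c) = (\<forall>i j. inverse (x i) * A i j * x j \<le> c)"
  unfolding qf_def by (simp add: sum_le_iff)

lemma term_le_qf: "inverse (x i) * A i j * x j \<le> qf A x"
  using qf_le_iff[of A x "qf A x"] by simp

lemma root_le:
  assumes "0 < k" "a \<le> c ^ k"
  shows "root k (a::'a::idem_semifield) \<le> c"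
proof (rule ccontr)
  assume "\<not> root k a \<le> c"
  then have "c < root k a" by simp
  then have "c ^ k < root k a ^ k" using power_less' assms(1) by blast
  then show False using root_pow[OF assms(1), of a] assms(2) by (metis leD)
qed

lemma prod_rot:
  fixes k :: nat
  assumes "0 < k"
  shows "(\<Prod>m<k. f ((m + 1) mod k)) = (\<Prod>m<k. (f m :: 'a::comm_monoid_mult))"
proof -
  obtain k' where k: "k = Suc k'" using assms by (cases k) auto
  have "(\<Prod>m<k. f ((m + 1) mod k)) = (\<Prod>m<k'. f ((m + 1) mod k)) * f 0"
    by (simp add: k)
  also have "(\<Prod>m<k'. f ((m + 1) mod k)) = (\<Prod>m<k'. f (Suc m))"
    by (rule prod.cong) (auto simp: k)
  also have "(\<Prod>m<k'. f (Suc m)) * f 0 = (\<Prod>m<k. f m)"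
    unfolding k prod.lessThan_Suc_shift by (rule mult.commute)
  finally show ?thesis .
qed

lemma cyc_telescope:
  fixes A :: "'n::finite \<Rightarrow> 'n \<Rightarrow> 'a::idem_semifield"
  assumes reg: "regular x" and k: "0 < k"
  shows "(\<Prod>m<k. A (is ! m) (is ! ((m + 1) mod k)))
     = (\<Prod>m<k. inverse (x (is ! m)) * A (is ! m) (is ! ((m + 1) mod k)) * x (is ! ((m + 1) mod k)))"
proof -
  have "(\<Prod>m<k. inverse (x (is ! m)) * A (is ! m) (is ! ((m + 1) mod k)) * x (is ! ((m + 1) mod k)))
     = (\<Prod>m<k. inverse (x (is ! m))) * (\<Prod>m<k. A (is ! m) (is ! ((m + 1) mod k))) * (\<Prod>m<k. x (is ! ((m + 1) mod k)))"
    by (simp add: prod.distrib)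
  also have "(\<Prod>m<k. x (is ! ((m + 1) mod k))) = (\<Prod>m<k. x (is ! m))"
    using prod_rot[OF k, of "\<lambda>m. x (is ! m)"] by simp
  also have "(\<Prod>m<k. inverse (x (is ! m))) * (\<Prod>m<k. A (is ! m) (is ! ((m + 1) mod k))) * (\<Prod>m<k. x (is ! m))
     = (\<Prod>m<k. inverse (x (is ! m)) * x (is ! m)) * (\<Prod>m<k. A (is ! m) (is ! ((m + 1) mod k)))"
    by (simp add: prod.distrib mult_ac)
  also have "(\<Prod>m<k. inverse (x (is ! m)) * x (is ! m)) = 1"
    using reg by (simp add: regular_def left_inverse')
  finally show ?thesis by simp
qed

lemma finite_lists: "finite {is :: 'n::finite list. length is = k}"
  using finite_lists_length_eq[of "UNIV :: 'n set" k] by simp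

lemma spec_rad_le:
  fixes A :: "'n::finite \<Rightarrow> 'n \<Rightarrow> 'a::idem_semifield"
  assumes reg: "regular x"
  shows "spec_rad A \<le> qf A x"
  unfolding spec_rad_def
proof (subst sum_le_iff, simp, intro ballI)
  fix k assume "k \<in> {1..CARD('n)}"
  then have k: "0 < k" by simp
  show "(\<Sum>is\<in>{is :: 'n list. length is = k}. root k (\<Prod>m<k. A (is ! m) (is ! ((m + 1) mod k)))) \<le> qf A x"
  proof (subst sum_le_iff, rule finite_lists, intro ballI)
    fix "is" :: "'n list"
    have "(\<Prod>m<k. A (is ! m) (is ! ((m + 1) mod k))) \<le> qf A x ^ card {..<k}"
      unfolding cyc_telescope[OF reg k]
      by (rule prod_le_pow) (auto simp: term_le_qf)
    then show "root k (\<Prod>m<k. A (is ! m) (is ! ((m + 1) mod k))) \<le> qf A x"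
      using root_le[OF k] by simp
  qed
qed

lemma diag_le_spec_rad:
  fixes A :: "'n::finite \<Rightarrow> 'n \<Rightarrow> 'a::idem_semifield"
  shows "A i i \<le> spec_rad A"
proof -
  have "root 1 (A i i) = A i i" using root_pow[of 1 "A i i"] by simp
  have "(\<Prod>m<1. A ([i] ! m) ([i] ! ((m + 1) mod 1))) = A i i" by simp
  have "root 1 (\<Prod>m<1. A ([i] ! m) ([i] ! ((m + 1) mod 1)))
      \<le> (\<Sum>is\<in>{is :: 'n list. length is = 1}. root 1 (\<Prod>m<1. A (is ! m) (is ! ((m + 1) mod 1))))"
    by (rule member_le_sum'[OF finite_lists]) simp
  also have "\<dots> \<le> spec_rad A" unfolding spec_rad_def
    by (rule member_le_sum'[where f = "\<lambda>k. \<Sum>is\<in>{is :: 'n list. length is = k}. root k (\<Prod>m<k. A (is ! m) (is ! ((m + 1) mod k)))"])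
       (auto simp: Suc_le_eq)
  finally show ?thesis using \<open>root 1 (A i i) = A i i\<close> by simp
qed


lemma nz_mono: "(a::'a::idem_semifield) \<noteq> 0 \<Longrightarrow> a \<le> b \<Longrightarrow> b \<noteq> 0"
  using zero_le'[of a] by auto

lemma walk_sub:
  fixes M :: "'n \<Rightarrow> 'n \<Rightarrow> 'a::idem_semifield"
  assumes "\<And>i j. M i j * x j \<le> x i"
  shows "walkprod M w p * x (w p) \<le> x (w 0)"
proof (induction p)
  case 0 then show ?case by (simp add: walkprod_def)
next
  case (Suc p)
  have "walkprod M w (Suc p) * x (w (Suc p)) = walkprod M w p * (M (w p) (w (Suc p)) * x (w (Suc p)))"
    by (simp add: walkprod_def mult.assoc)
  also have "\<dots> \<le> walkprod M w p * x (w p)" by (rule mult_mono_l) (rule assms)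
  also have "\<dots> \<le> x (w 0)" by (rule Suc)
  finally show ?case .
qed

theorem corollary1:
  fixes A :: "'n::finite \<Rightarrow> 'n \<Rightarrow> 'a::idem_semifield"
  assumes recip: "mconj A = A"
    and nonzero: "\<forall>i j. A i j \<noteq> 0"
  shows "(\<exists>x. regular x \<and> mdist A (outer_conj x) = spec_rad A)
    \<and> (\<forall>x. regular x \<longrightarrow> spec_rad A \<le> mdist A (outer_conj x))
    \<and> {x. regular x \<and> mdist A (outer_conj x) = spec_rad A}
      = {mvec (mstar (\<lambda>i j. inverse (spec_rad A) * A i j)) u | u. u \<noteq> (\<lambda>_. 0)}"
proof -
  define lam where "lam = spec_rad A"
  define B where "B = (\<lambda>i j. inverse lam * A i j)"
  have lam0: "lam \<noteq> 0"
  proof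
    fix i :: 'n
    assume "lam = 0"
    then have "A i i \<le> 0" using diag_le_spec_rad[of A i] by (simp add: lam_def)
    then show False using nonzero zero_le'[of "A i i"] by auto
  qed
  have Bnz: "B i j \<noteq> 0" for i j
    unfolding B_def using nonzero lam0 by (simp add: mult_nz inverse_nz)
  have cycB: "(\<Prod>m<k. B (is ! m) (is ! ((m + 1) mod k))) \<le> 1"
    if k: "1 \<le> k" "k \<le> CARD('n)" and len: "length is = k" for k "is"
  proof -
    let ?c = "\<Prod>m<k. A (is ! m) (is ! ((m + 1) mod k))"
    have "root k ?c \<le> (\<Sum>is\<in>{is :: 'n list. length is = k}. root k (\<Prod>m<k. A (is ! m) (is ! ((m + 1) mod k))))"
      by (rule member_le_sum'[OF finite_lists]) (simp add: len)
    also have "\<dots> \<le> lam" unfolding lam_def spec_rad_def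
      by (rule member_le_sum'[where f = "\<lambda>k. \<Sum>is\<in>{is :: 'n list. length is = k}. root k (\<Prod>m<k. A (is ! m) (is ! ((m + 1) mod k)))"])
         (use k in auto)
    finally have "root k ?c ^ k \<le> lam ^ k" by (rule power_mono')
    then have c: "?c \<le> lam ^ k" using root_pow[of k ?c] k by simp
    have "(\<Prod>m<k. B (is ! m) (is ! ((m + 1) mod k))) = inverse lam ^ k * ?c"
      unfolding B_def by (simp add: prod.distrib)
    also have "\<dots> \<le> inverse lam ^ k * lam ^ k" using c by (rule mult_mono_l)
    also have "\<dots> = 1" using lam0 by (simp add: power_mult_distrib[symmetric] left_inverse')
    finally show ?thesis .
  qed
  have red: "walkprod B w p \<le> mstar B (w 0) (w p)" for w p
    by (rule walk_reduce) (use cycB in auto)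
  have K: "(qf A x \<le> lam) = (\<forall>i j. B i j * x j \<le> x i)" if reg: "regular x" for x
  proof -
    have "(inverse (x i) * A i j * x j \<le> lam) = (B i j * x j \<le> x i)" for i j
    proof -
      have xi: "x i \<noteq> 0" using reg by (simp add: regular_def)
      have c: "inverse lam * x i \<noteq> 0" using lam0 xi by (simp add: mult_nz inverse_nz)
      have e1: "inverse (x i) * A i j * x j * (inverse lam * x i) = (inverse lam * A i j * x j) * (inverse (x i) * x i)"
        by (simp add: mult_ac)
      have e2: "lam * (inverse lam * x i) = (lam * inverse lam) * x i" by (simp add: mult_ac)
      show ?thesis
        using mult_le_cancel_r[OF c, of "inverse (x i) * A i j * x j" lam]
        unfolding e1 e2 using xi lam0 by (simp add: left_inverse' right_inverse B_def)
    qed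
    then show ?thesis by (simp add: qf_le_iff)
  qed
  have sup: "regular (mvec (mstar B) u) \<and> mdist A (outer_conj (mvec (mstar B) u)) = lam"
    if u: "u \<noteq> (\<lambda>_. 0)" for u
  proof -
    define x where "x = mvec (mstar B) u"
    obtain j0 where j0: "u j0 \<noteq> 0" using u by (auto simp: fun_eq_iff)
    have starnz: "mstar B i j \<noteq> 0" for i j
    proof -
      define w :: "nat \<Rightarrow> 'n" where "w = (\<lambda>m. if m = 0 then i else j)"
      define p where "p = (if i = j then 0 else (1::nat))"
      have pn: "p < CARD('n)"
      proof (cases "i = j")
        case False
        have "card {i, j} \<le> CARD('n)" by (rule card_mono) auto
        then show ?thesis using False by (simp add: p_def)
      qed (simp add: p_def)
      have "walkprod B w p \<noteq> 0"
        by (cases "i = j") (auto simp: walkprod_def p_def w_def Bnz)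
      moreover have "walkprod B w p \<le> mstar B i j"
        using walk_lower[of B w p] mpow_le_mstar[OF pn, of B i j]
        by (cases "i = j") (auto simp: w_def p_def)
      ultimately show ?thesis by (rule nz_mono)
    qed
    have reg: "regular x"
      unfolding regular_def
    proof
      fix i
      have "mstar B i j0 * u j0 \<le> x i" unfolding x_def mvec_def by (rule member_le_sum') auto
      then show "x i \<noteq> 0" using mult_nz[OF starnz j0] nz_mono by blast
    qed
    have key: "B i j * mstar B j k \<le> mstar B i k" for i j k
    proof -
      have "\<forall>p\<in>{..<CARD('n)}. mpow B p j k * B i j \<le> mstar B i k"
      proof
        fix p
        show "mpow B p j k * B i j \<le> mstar B i k"
        proof (rule walk_upper)
          fix w assume w0: "w 0 = j" and wp: "w p = k"
          define w' where "w' = (\<lambda>m. case m of 0 \<Rightarrow> i | Suc m' \<Rightarrow> w m')"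
          have "walkprod B w' (Suc p) = B i j * walkprod B w p"
            unfolding walkprod_def prod.lessThan_Suc_shift using w0 by (simp add: w'_def)
          then show "walkprod B w p * B i j \<le> mstar B i k"
            using red[of w' "Suc p"] wp by (simp add: w'_def mult.commute)
        qed
      qed
      then show ?thesis unfolding mstar_def
        by (simp add: sum_distrib_left sum_le_iff mult.commute)
    qed
    have "B i j * x j \<le> x i" for i j
    proof -
      have "\<forall>k\<in>UNIV. B i j * (mstar B j k * u k) \<le> x i"
      proof
        fix k
        have "B i j * (mstar B j k * u k) \<le> mstar B i k * u k"
          unfolding mult.assoc[symmetric] using key by (rule mult_mono_r)
        also have "\<dots> \<le> x i" unfolding x_def mvec_def by (rule member_le_sum') auto
        finally show "B i j * (mstar B j k * u k) \<le> x i" .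
      qed
      then show ?thesis unfolding x_def mvec_def
        by (simp add: sum_distrib_left sum_le_iff)
    qed
    then have "qf A x \<le> lam" using K[OF reg] by simp
    moreover have "lam \<le> qf A x" unfolding lam_def by (rule spec_rad_le[OF reg])
    ultimately have "qf A x = lam" by simp
    then show ?thesis using reg mdist_eq[OF recip reg] by (simp add: x_def)
  qed
  have sub: "mvec (mstar B) x = x" if reg: "regular x" and le: "qf A x \<le> lam" for x
  proof
    fix i
    have Bx: "B i j * x j \<le> x i" for i j using K[OF reg] le by simp
    have "\<forall>j\<in>UNIV. mstar B i j * x j \<le> x i"
    proof
      fix j
      have "\<forall>p\<in>{..<CARD('n)}. mpow B p i j * x j \<le> x i"
      proof
        fix p
        show "mpow B p i j * x j \<le> x i"
          by (rule walk_upper) (use walk_sub[of B x, OF Bx] in blast)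
      qed
      then show "mstar B i j * x j \<le> x i" unfolding mstar_def
        by (simp add: sum_distrib_right sum_le_iff)
    qed
    then have "mvec (mstar B) x i \<le> x i" unfolding mvec_def by (simp add: sum_le_iff)
    moreover have "x i \<le> mvec (mstar B) x i"
    proof -
      have "1 \<le> mstar B i i" using mpow_le_mstar[of 0 B i i] by (simp add: idm_def)
      then have "1 * x i \<le> mstar B i i * x i" by (rule mult_mono_r)
      also have "\<dots> \<le> mvec (mstar B) x i" unfolding mvec_def by (rule member_le_sum') auto
      finally show ?thesis by simp
    qed
    ultimately show "mvec (mstar B) x i = x i" by simp
  qed
  have P1: "\<exists>x. regular x \<and> mdist A (outer_conj x) = lam"
    using sup[of "\<lambda>_. 1"] by (auto simp: fun_eq_iff)
  have P2: "\<forall>x. regular x \<longrightarrow> lam \<le> mdist A (outer_conj x)"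
    using mdist_eq[OF recip] spec_rad_le unfolding lam_def by metis
  have P3: "{x. regular x \<and> mdist A (outer_conj x) = lam} = {mvec (mstar B) u | u. u \<noteq> (\<lambda>_. 0)}"
  proof (rule set_eqI, rule iffI)
    fix x assume "x \<in> {x. regular x \<and> mdist A (outer_conj x) = lam}"
    then have reg: "regular x" and d: "mdist A (outer_conj x) = lam" by auto
    have "qf A x \<le> lam" using d mdist_eq[OF recip reg] by simp
    then have "mvec (mstar B) x = x" using sub reg by blast
    moreover have "x \<noteq> (\<lambda>_. 0)" using reg by (auto simp: regular_def fun_eq_iff)
    ultimately show "x \<in> {mvec (mstar B) u | u. u \<noteq> (\<lambda>_. 0)}" by (metis (mono_tags, lifting) mem_Collect_eq)
  next
    fix x assume "x \<in> {mvec (mstar B) u | u. u \<noteq> (\<lambda>_. 0)}"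
    then show "x \<in> {x. regular x \<and> mdist A (outer_conj x) = lam}" using sup by auto
  qed
  show ?thesis using P1 P2 P3 unfolding lam_def B_def by simp
qed

end
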